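(* For $n\ge2$ and all $P,Q\in\Gamma_n$, $D_{\Psi J}(P\|Q)\le \frac43 D_{\Psi T}(P\|Q)$.
   Context: $\Gamma_n=\{P=(p_1,\dots,p_n): p_i>0,\ \sum p_i=1\}$. $\Psi(P\|Q)=\sum_{i=1}^n\frac{(p_i-q_i)^2(p_i+q_i)}{p_iq_i}$; $J(P\|Q)=\sum_{i=1}^n(p_i-q_i)\ln\frac{p_i}{q_i}$; $T(P\|Q)=\sum_{i=1}^n\frac{p_i+q_i}{2}\ln\frac{p_i+q_i}{2\sqrt{p_iq_i}}$. $D_{\Psi J}=\frac1{16}\Psi-\frac18J$, $D_{\Psi T}=\frac1{16}\Psi-T$. *)

theory Defs
  imports Complex_Main
begin

definition Gamma :: "nat \<Rightarrow> (nat \<Rightarrow> real) set" where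
  "Gamma n = {p. (\<forall>i\<in>{1..n}. p i > 0) \<and> (\<Sum>i=1..n. p i) = 1}"

definition Psi :: "nat \<Rightarrow> (nat \<Rightarrow> real) \<Rightarrow> (nat \<Rightarrow> real) \<Rightarrow> real" where
  "Psi n p q = (\<Sum>i=1..n. (p i - q i)^2 * (p i + q i) / (p i * q i))"

definition Jdiv :: "nat \<Rightarrow> (nat \<Rightarrow> real) \<Rightarrow> (nat \<Rightarrow> real) \<Rightarrow> real" where
  "Jdiv n p q = (\<Sum>i=1..n. (p i - q i) * ln (p i / q i))"

definition Tdiv :: "nat \<Rightarrow> (nat \<Rightarrow> real) \<Rightarrow> (nat \<Rightarrow> real) \<Rightarrow> real" where
  "Tdiv n p q = (\<Sum>i=1..n. (p i + q i) / 2 * ln ((p i + q i) / (2 * sqrt (p i * q i))))"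

definition D_PsiJ :: "nat \<Rightarrow> (nat \<Rightarrow> real) \<Rightarrow> (nat \<Rightarrow> real) \<Rightarrow> real" where
  "D_PsiJ n p q = Psi n p q / 16 - Jdiv n p q / 8"

definition D_PsiT :: "nat \<Rightarrow> (nat \<Rightarrow> real) \<Rightarrow> (nat \<Rightarrow> real) \<Rightarrow> real" where
  "D_PsiT n p q = Psi n p q / 16 - Tdiv n p q"

end

theory Submission
  imports Defs
begin

definition MM :: "real \<Rightarrow> real" where
  "MM x = (x-1/x)*(x+1/x)^3/2 - 5*(x-1/x)*(x+1/x) + 12*ln x"

definition KK :: "real \<Rightarrow> real" where
  "KK x = (x^2-1)^2/x^2 + 12*(x^2-1)/(x^2+1)*ln x - 32*ln ((x^2+1)/(2*x))"

lemma MM_deriv: "x > 0 \<Longrightarrow> (MM has_real_derivative 2*(x-1/x)^4/x) (at x)"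
  unfolding MM_def
  apply (rule derivative_eq_intros refl | simp)+
  apply (simp add: field_simps power2_eq_square power3_eq_cube power4_eq_xxxx)
  done

lemma KK_deriv: assumes x: "x > 0" shows "(KK has_real_derivative 4*MM x/(x*(x+1/x)^2)) (at x)"
proof -
  have p: "x^2+1 > 0" using zero_le_power2[of x] by linarith
  have h1: "x^2+1 \<noteq> 0" "x \<noteq> 0" "2*x \<noteq> 0" "(x^2+1)/(2*x) > 0" "1+x^2 \<noteq> 0" "1 + x*x \<noteq> 0"
    using x p unfolding power2_eq_square by auto
  show ?thesis
  unfolding KK_def MM_def
  apply (rule derivative_eq_intros DERIV_ident refl | use x h1 in \<open>simp; fail\<close>)+
  using x h1 apply (simp add: divide_simps add_pos_pos)
  apply (simp add: algebra_simps power2_eq_square power3_eq_cube power4_eq_xxxx)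
  done
qed

lemma MM_sign1: assumes "x \<ge> 1" shows "MM x \<ge> 0"
proof -
  have "MM 1 \<le> MM x"
    by (rule deriv_nonneg_imp_mono[OF MM_deriv]) (use assms in auto)
  then show ?thesis by (simp add: MM_def)
qed

lemma MM_sign2: assumes "x > 0" "x \<le> 1" shows "MM x \<le> 0"
proof -
  have "MM x \<le> MM 1"
    by (rule deriv_nonneg_imp_mono[OF MM_deriv]) (use assms in auto)
  then show ?thesis by (simp add: MM_def)
qed

lemma posd: "y > 0 \<Longrightarrow> y*(y+1/y)^2 > (0::real)"
  by (metis add_pos_pos divide_pos_pos mult_pos_pos zero_less_one zero_less_power)

lemma KK_nonneg: assumes "x > 0" shows "KK x \<ge> 0"
proof (cases "x \<ge> 1")
  case True
  have "KK 1 \<le> KK x"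
    by (rule deriv_nonneg_imp_mono[OF KK_deriv]) (use True MM_sign1 in auto)
  then show ?thesis by (simp add: KK_def)
next
  case False
  have "KK 1 \<le> KK x"
    by (rule deriv_nonpos_imp_antimono[OF KK_deriv])
       (use False assms MM_sign2 posd in \<open>auto intro!: divide_nonpos_pos\<close>)
  then show ?thesis by (simp add: KK_def)
qed

lemma term_ineq:
  fixes p q :: real assumes p: "p > 0" and q: "q > 0"
  shows "0 \<le> (p-q)^2*(p+q)/(p*q) + 6*((p-q)*ln(p/q)) - 64*((p+q)/2*ln((p+q)/(2*sqrt(p*q))))"
proof -
  define x where "x = sqrt (p/q)"
  have x: "x > 0" using p q by (simp add: x_def)
  have nz: "1 + x*x \<noteq> 0" "x^2+1 \<noteq> 0" using x by (auto simp: power2_eq_square) (smt (verit) mult_pos_pos)+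
  have px: "p = x^2*q" using p q by (simp add: x_def)
  have s: "sqrt (p*q) = x*q" using x q by (simp add: px real_sqrt_mult power2_eq_square)
  have l: "ln (p/q) = 2 * ln x" using x q by (simp add: px ln_realpow)
  have r: "(p+q)/(2*sqrt(p*q)) = (x^2+1)/(2*x)" unfolding s using x q by (subst px) (simp add: field_simps)
  have e: "(p-q)^2*(p+q)/(p*q) + 6*((p-q)*ln(p/q)) - 64*((p+q)/2*ln((p+q)/(2*sqrt(p*q))))
     = q*(x^2+1) * KK x"
    unfolding l r KK_def using x q nz
    apply (subst px)+
    apply (simp add: divide_simps)
    apply (simp add: algebra_simps power2_eq_square)
    done
  show ?thesis unfolding e using KK_nonneg[OF x] x q
    by (simp add: add_pos_nonneg)
qed

theorem proposition5p13:
  fixes n :: nat and P Q :: "nat \<Rightarrow> real"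
  assumes "n \<ge> 2" and "P \<in> Gamma n" and "Q \<in> Gamma n"
  shows "D_PsiJ n P Q \<le> 4 / 3 * D_PsiT n P Q"
proof -
  have pos: "P i > 0" "Q i > 0" if "i \<in> {1..n}" for i
    using assms(2,3) that by (auto simp: Gamma_def)
  have "0 \<le> (\<Sum>i=1..n. (P i - Q i)^2 * (P i + Q i) / (P i * Q i) + 6*((P i - Q i) * ln (P i / Q i))
       - 64*((P i + Q i) / 2 * ln ((P i + Q i) / (2 * sqrt (P i * Q i)))))"
    by (rule sum_nonneg) (use pos term_ineq in auto)
  also have "\<dots> = Psi n P Q + 6 * Jdiv n P Q - 64 * Tdiv n P Q"
    unfolding Psi_def Jdiv_def Tdiv_def
    by (simp add: sum.distrib sum_subtractf sum_distrib_left)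
  finally show ?thesis unfolding D_PsiJ_def D_PsiT_def by (simp add: algebra_simps)
qed

end
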